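(* Let $\rho$ be an entangled state on $\mathbb{C}^m\otimes\mathbb{C}^n$ and $\mathcal{E}_\rho=\{W : W \text{ is an EW and } \mathrm{tr}(W\rho)<0\}$. Then: (i) $\mathcal{E}_\rho$ is convex. (ii) $\rho^*$ is entangled, and $W\in\mathcal{E}_\rho$ if and only if $W^*\in\mathcal{E}_{\rho^*}$. Moreover, $\mathcal{E}_\rho$ contains a real EW if and only if $\mathcal{E}_\rho\cap\mathcal{E}_{\rho^*}\neq\emptyset$. (iii) If $\rho$ is PPT entangled, then $W\in\mathcal{E}_\rho$ if and only if $W^\Gamma\in\mathcal{E}_{\rho^\Gamma}$. (iv) If $\rho$ is PPT entangled and $\rho^+$ is separable, then $\mathrm{tr}(W\rho^* )\ge-\mathrm{tr}(W\rho)>0$ whenever $W\in\mathcal{E}_\rho$, and $\mathrm{tr}(W\rho)\ge-\mathrm{tr}(W\rho^* )>0$ whenever $W\in\mathcal{E}_{\rho^*}$. (v) If $\sigma=(U\otimes V)\rho(U\otimes V)^\dagger$ with $U,V$ unitary, then $(U\otimes V)W(U\otimes V)^\dagger\in\mathcal{E}_\sigma$ for every $W\in\mathcal{E}_\rho$, and $\mathcal{E}_\sigma=(U\otimes V)\mathcal{E}_\rho(U\otimes V)^\dagger$.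
   Context: An entanglement witness (EW) on $\mathbb{C}^m\otimes\mathbb{C}^n$ is a Hermitian matrix $W$ with $\mathrm{tr}(W\sigma)\ge0$ for all separable states $\sigma$ and $\mathrm{tr}(W\sigma)<0$ for at least one entangled state. A real EW is an EW whose matrix has real entries. $M^*$ is the entrywise complex conjugate, $\rho^+=\frac12(\rho+\rho^* )$, and $M^\Gamma$ denotes the partial transpose with respect to the first subsystem. A state is PPT if $\rho^\Gamma\ge0$. *)

theory Defs
  imports "HOL-Analysis.Analysis"
begin

text \<open>The bipartite space C^m (x) C^n is indexed by
  the product type 'a \<times> 'b (first factor 'a, second factor 'b).\<close>

definition mconj :: "complex^'n^'m \<Rightarrow> complex^'n^'m" where
  "mconj M = (\<chi> i j. cnj (M $ i $ j))"

definition adj :: "complex^'n^'m \<Rightarrow> complex^'m^'n" where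
  "adj M = (\<chi> i j. cnj (M $ j $ i))"

definition hermitian :: "complex^'n^'n \<Rightarrow> bool" where
  "hermitian M \<longleftrightarrow> adj M = M"

definition psd :: "complex^'n^'n \<Rightarrow> bool" where
  "psd M \<longleftrightarrow> hermitian M \<and>
     (\<forall>x::complex^'n. 0 \<le> Re (\<Sum>i\<in>UNIV. \<Sum>j\<in>UNIV. cnj (x $ i) * M $ i $ j * x $ j))"

definition is_state :: "complex^'n^'n \<Rightarrow> bool" where
  "is_state M \<longleftrightarrow> psd M \<and> trace M = 1"

definition unitary :: "complex^'n^'n \<Rightarrow> bool" where
  "unitary U \<longleftrightarrow> U ** adj U = mat 1 \<and> adj U ** U = mat 1"

definition real_matrix :: "complex^'n^'m \<Rightarrow> bool" where
  "real_matrix M \<longleftrightarrow> (\<forall>i j. Im (M $ i $ j) = 0)"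

definition kron :: "complex^('a::finite)^'a \<Rightarrow> complex^('b::finite)^'b \<Rightarrow> complex^('a \<times> 'b)^('a \<times> 'b)" where
  "kron A B = (\<chi> p q. A $ fst p $ fst q * B $ snd p $ snd q)"

definition ptrans :: "complex^('a::finite \<times> 'b::finite)^('a \<times> 'b) \<Rightarrow> complex^('a \<times> 'b)^('a \<times> 'b)" where
  "ptrans M = (\<chi> p q. M $ (fst q, snd p) $ (fst p, snd q))"

definition separable :: "complex^('a::finite \<times> 'b::finite)^('a \<times> 'b) \<Rightarrow> bool" where
  "separable \<sigma> \<longleftrightarrow> (\<exists>(I::nat set) p A B. finite I \<and>
      (\<forall>i\<in>I. 0 \<le> p i \<and> is_state (A i) \<and> is_state (B i)) \<and> sum p I = 1 \<and>
      \<sigma> = (\<Sum>i\<in>I. p i *\<^sub>R kron (A i) (B i)))"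

definition entangled :: "complex^('a::finite \<times> 'b::finite)^('a \<times> 'b) \<Rightarrow> bool" where
  "entangled \<rho> \<longleftrightarrow> is_state \<rho> \<and> \<not> separable \<rho>"

definition PPT :: "complex^('a::finite \<times> 'b::finite)^('a \<times> 'b) \<Rightarrow> bool" where
  "PPT \<rho> \<longleftrightarrow> is_state \<rho> \<and> psd (ptrans \<rho>)"

text \<open>tr(W sigma) is real for Hermitian W and sigma, so we compare its real part.\<close>
definition EW :: "complex^('a::finite \<times> 'b::finite)^('a \<times> 'b) \<Rightarrow> bool" where
  "EW W \<longleftrightarrow> hermitian W \<and>
     (\<forall>\<sigma>. separable \<sigma> \<longrightarrow> 0 \<le> Re (trace (W ** \<sigma>))) \<and>
     (\<exists>\<rho>. entangled \<rho> \<and> Re (trace (W ** \<rho>)) < 0)"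

definition EWset :: "complex^('a::finite \<times> 'b::finite)^('a \<times> 'b) \<Rightarrow>
    (complex^('a \<times> 'b)^('a \<times> 'b)) set" where
  "EWset \<rho> = {W. EW W \<and> Re (trace (W ** \<rho>)) < 0}"

definition rho_plus :: "complex^'n^'n \<Rightarrow> complex^'n^'n" where
  "rho_plus \<rho> = (1/2::real) *\<^sub>R (\<rho> + mconj \<rho>)"

end

theory Submission
  imports Defs
begin


lemma adj_adj[simp]: "adj (adj M) = M"
  by (simp add: adj_def vec_eq_iff)
lemma mconj_mconj[simp]: "mconj (mconj M) = M"
  by (simp add: mconj_def vec_eq_iff)
lemma adj_mult: "adj ((A::complex^'n^'m) ** B) = adj B ** adj A"
  by (simp add: adj_def matrix_matrix_mult_def vec_eq_iff cnj_sum mult.commute)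
lemma mconj_mult: "mconj ((A::complex^'n^'m) ** B) = mconj A ** mconj B"
  by (simp add: mconj_def matrix_matrix_mult_def vec_eq_iff cnj_sum)
lemma adj_add: "adj (A + B) = adj A + adj B"
  by (simp add: adj_def vec_eq_iff)
lemma adj_scaleR: "adj (r *\<^sub>R A) = r *\<^sub>R adj A"
  by (simp add: adj_def vec_eq_iff)
lemma mconj_add: "mconj (A + B) = mconj A + mconj B"
  by (simp add: mconj_def vec_eq_iff)
lemma mconj_scaleR: "mconj (r *\<^sub>R A) = r *\<^sub>R mconj A"
  by (simp add: mconj_def vec_eq_iff)
lemma trace_mconj: "trace (mconj A) = cnj (trace A)"
  by (simp add: mconj_def trace_def cnj_sum)
lemma trace_scaleR: "trace (r *\<^sub>R (A::complex^'n^'n)) = r *\<^sub>R trace A"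
  by (simp add: trace_def scaleR_sum_right)
lemma ptrans_ptrans[simp]: "ptrans (ptrans M) = M"
  by (simp add: ptrans_def vec_eq_iff)
lemma ptrans_add: "ptrans (A + B) = ptrans A + ptrans B"
  by (simp add: ptrans_def vec_eq_iff)
lemma ptrans_scaleR: "ptrans (r *\<^sub>R A) = r *\<^sub>R ptrans A"
  by (simp add: ptrans_def vec_eq_iff)
lemma adj_ptrans: "adj (ptrans M) = ptrans (adj M)"
  by (simp add: ptrans_def adj_def vec_eq_iff)
lemma adj_mconj: "adj (mconj M) = mconj (adj M)"
  by (simp add: mconj_def adj_def vec_eq_iff)
lemma trace_ptrans: "trace (ptrans M) = trace M"
  by (simp add: ptrans_def trace_def)
lemma kron_mult: "kron A B ** kron C D = kron (A ** C) (B ** D)"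
  by (simp add: kron_def matrix_matrix_mult_def vec_eq_iff sum_product
      UNIV_Times_UNIV[symmetric] sum.cartesian_product mult_ac split_def del: UNIV_Times_UNIV)
lemma adj_kron: "adj (kron A B) = kron (adj A) (adj B)"
  by (simp add: kron_def adj_def vec_eq_iff)
lemma mconj_kron: "mconj (kron A B) = kron (mconj A) (mconj B)"
  by (simp add: kron_def mconj_def vec_eq_iff)
lemma ptrans_kron: assumes "hermitian A" shows "ptrans (kron A B) = kron (mconj A) B"
proof -
  have e: "A $ j $ i = cnj (A $ i $ j)" for i j
  proof -
    have "A $ j $ i = adj A $ j $ i" using assms by (simp add: hermitian_def)
    then show ?thesis by (simp add: adj_def)
  qed
  show ?thesis
    unfolding vec_eq_iff
  proof (intro allI)
    fix p q :: "'a \<times> 'b"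
    show "ptrans (kron A B) $ p $ q = kron (mconj A) B $ p $ q"
      using e[of "fst p" "fst q"] by (simp add: ptrans_def kron_def mconj_def)
  qed
qed

lemma sum_UNIV_pair: "(\<Sum>i\<in>UNIV. \<Sum>k\<in>UNIV. f i k) = (\<Sum>x\<in>UNIV. f (fst x) (snd x))"
  by (simp add: sum.cartesian_product split_def UNIV_Times_UNIV[symmetric] del: UNIV_Times_UNIV)

lemma trace_ptrans_mult: "trace (ptrans A ** ptrans B) = trace (A ** B)"
proof -
  let ?g = "\<lambda>(r::'a\<times>'b,s::'a\<times>'b). A $ r $ s * B $ s $ r"
  let ?phi = "\<lambda>((p1::'a,p2::'b),(q1::'a,q2::'b)). ((q1,p2),(p1,q2))"
  have "trace (ptrans A ** ptrans B) = (\<Sum>x\<in>UNIV. ?g (?phi x))"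
    by (simp add: trace_def matrix_matrix_mult_def ptrans_def sum_UNIV_pair split_def)
  also have "\<dots> = (\<Sum>x\<in>UNIV. ?g x)"
    by (rule sum.reindex_bij_witness[of _ ?phi ?phi]) auto
  also have "\<dots> = trace (A ** B)"
    by (simp add: trace_def matrix_matrix_mult_def sum_UNIV_pair split_def)
  finally show ?thesis .
qed


lemma qf_mv: "(\<Sum>i\<in>UNIV. \<Sum>j\<in>UNIV. cnj (x $ i) * M $ i $ j * x $ j) = (\<Sum>i\<in>UNIV. cnj (x $ i) * (M *v x) $ i)"
  by (simp add: matrix_vector_mult_def sum_distrib_left mult.assoc)

lemma inner_mv: "(\<Sum>i\<in>UNIV. cnj (x $ i) * (K *v z) $ i) = (\<Sum>k\<in>UNIV. cnj ((adj K *v x) $ k) * z $ k)"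
proof -
  have "(\<Sum>i\<in>UNIV. cnj (x $ i) * (K *v z) $ i) = (\<Sum>i\<in>UNIV. \<Sum>k\<in>UNIV. cnj (x $ i) * K $ i $ k * z $ k)"
    by (simp add: matrix_vector_mult_def sum_distrib_left mult.assoc)
  also have "\<dots> = (\<Sum>k\<in>UNIV. \<Sum>i\<in>UNIV. cnj (x $ i) * K $ i $ k * z $ k)"
    by (rule sum.swap)
  also have "\<dots> = (\<Sum>k\<in>UNIV. cnj ((adj K *v x) $ k) * z $ k)"
    by (simp add: matrix_vector_mult_def adj_def cnj_sum sum_distrib_right sum_distrib_left mult_ac)
  finally show ?thesis .
qed

lemma psd_conj:
  fixes K :: "complex^'n^'m" and M :: "complex^'n^'n"
  assumes "psd M" shows "psd (K ** M ** adj K)"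
proof -
  have h: "hermitian M" using assms by (simp add: psd_def)
  have "adj (K ** M ** adj K) = K ** M ** adj K"
    using h by (simp add: adj_mult hermitian_def matrix_mul_assoc)
  moreover have "0 \<le> Re (\<Sum>i\<in>UNIV. \<Sum>j\<in>UNIV. cnj (x $ i) * (K ** M ** adj K) $ i $ j * x $ j)" for x
  proof -
    let ?y = "adj K *v x"
    have "(\<Sum>i\<in>UNIV. \<Sum>j\<in>UNIV. cnj (x $ i) * (K ** M ** adj K) $ i $ j * x $ j)
        = (\<Sum>i\<in>UNIV. cnj (x $ i) * (K *v (M *v ?y)) $ i)"
      by (simp add: qf_mv matrix_vector_mul_assoc matrix_mul_assoc)
    also have "\<dots> = (\<Sum>k\<in>UNIV. cnj (?y $ k) * (M *v ?y) $ k)"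
      by (rule inner_mv)
    also have "\<dots> = (\<Sum>i\<in>UNIV. \<Sum>j\<in>UNIV. cnj (?y $ i) * M $ i $ j * ?y $ j)"
      by (simp add: qf_mv)
    finally show ?thesis using assms unfolding psd_def by simp
  qed
  ultimately show ?thesis by (simp add: psd_def hermitian_def)
qed

lemma state_conj:
  fixes K M :: "complex^'n^'n"
  assumes "unitary K" "is_state M" shows "is_state (K ** M ** adj K)"
proof -
  have "trace (K ** M ** adj K) = trace (adj K ** (K ** M))" by (rule trace_mul_sym)
  also have "\<dots> = trace M" using assms(1) by (simp add: matrix_mul_assoc unitary_def)
  finally show ?thesis using assms psd_conj by (auto simp: is_state_def)
qed

lemma psd_mconj: assumes "psd M" shows "psd (mconj M)"
proof -
  have "hermitian (mconj M)" using assms by (simp add: psd_def hermitian_def adj_mconj)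
  moreover have "0 \<le> Re (\<Sum>i\<in>UNIV. \<Sum>j\<in>UNIV. cnj (x $ i) * mconj M $ i $ j * x $ j)" for x
  proof -
    let ?y = "\<chi> i. cnj (x $ i)"
    have eq: "(\<Sum>i\<in>UNIV. \<Sum>j\<in>UNIV. cnj (x $ i) * mconj M $ i $ j * x $ j)
       = cnj (\<Sum>i\<in>UNIV. \<Sum>j\<in>UNIV. cnj (?y $ i) * M $ i $ j * ?y $ j)"
      by (simp add: mconj_def cnj_sum)
    moreover have "0 \<le> Re (\<Sum>i\<in>UNIV. \<Sum>j\<in>UNIV. cnj (?y $ i) * M $ i $ j * ?y $ j)"
      using assms unfolding psd_def by blast
    moreover have "Re (\<Sum>i\<in>UNIV. \<Sum>j\<in>UNIV. cnj (x $ i) * mconj M $ i $ j * x $ j)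
       = Re (\<Sum>i\<in>UNIV. \<Sum>j\<in>UNIV. cnj (?y $ i) * M $ i $ j * ?y $ j)"
    proof -
      have rc: "\<And>z. Re (cnj z) = Re z" by simp
      show ?thesis by (subst eq) (rule rc)
    qed
    ultimately show ?thesis by linarith
  qed
  ultimately show ?thesis by (simp add: psd_def)
qed

lemma state_mconj: "is_state M \<Longrightarrow> is_state (mconj M)"
  by (simp add: is_state_def psd_mconj trace_mconj)

lemma sep_map:
  fixes f :: "complex^('a::finite \<times> 'b::finite)^('a \<times> 'b) \<Rightarrow> complex^('a \<times> 'b)^('a \<times> 'b)"
  assumes add: "\<And>X Y. f (X + Y) = f X + f Y" and sc: "\<And>r X. f (r *\<^sub>R X) = r *\<^sub>R f X"
    and kr: "\<And>A B. is_state A \<Longrightarrow> is_state B \<Longrightarrow> f (kron A B) = kron (g A) (h B)"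
    and gs: "\<And>A. is_state A \<Longrightarrow> is_state (g A)" and hs: "\<And>B. is_state B \<Longrightarrow> is_state (h B)"
    and sep: "separable \<sigma>"
  shows "separable (f \<sigma>)"
proof -
  obtain I :: "nat set" and p A B where I: "finite I" "\<forall>i\<in>I. 0 \<le> p i \<and> is_state (A i) \<and> is_state (B i)"
    "sum p I = 1" "\<sigma> = (\<Sum>i\<in>I. p i *\<^sub>R kron (A i) (B i))"
    using sep unfolding separable_def by blast
  have f0: "f 0 = 0" using sc[of 0 0] by simp
  have fs: "f (\<Sum>i\<in>J. F i) = (\<Sum>i\<in>J. f (F i))" if "finite J" for J :: "nat set" and F
    using that by (induction J rule: finite_induct) (auto simp: f0 add)
  have "f \<sigma> = (\<Sum>i\<in>I. p i *\<^sub>R kron (g (A i)) (h (B i)))"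
    using I by (simp add: fs sc kr)
  then show ?thesis unfolding separable_def using I gs hs
    by (intro exI[of _ I] exI[of _ p] exI[of _ "\<lambda>i. g (A i)"] exI[of _ "\<lambda>i. h (B i)"]) auto
qed



lemma matrix_add_rdistrib': "((A::complex^'n^'m) + B) ** C = A ** C + B ** C"
  by (simp add: matrix_matrix_mult_def vec_eq_iff distrib_right sum.distrib)

lemma EWset_iff: "entangled \<rho> \<Longrightarrow> W \<in> EWset \<rho> \<longleftrightarrow> hermitian W \<and>
   (\<forall>\<sigma>. separable \<sigma> \<longrightarrow> 0 \<le> Re (trace (W ** \<sigma>))) \<and> Re (trace (W ** \<rho>)) < 0"
  by (auto simp: EWset_def EW_def)

lemma sep_mconj: "separable \<sigma> \<Longrightarrow> separable (mconj \<sigma>)"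
  by (rule sep_map[where g=mconj and h=mconj]) (auto simp: mconj_add mconj_scaleR mconj_kron state_mconj)

lemma sep_ptrans: fixes \<sigma> :: "complex^('a::finite \<times> 'b::finite)^('a \<times> 'b)" assumes "separable \<sigma>" shows "separable (ptrans \<sigma>)"
proof (rule sep_map[where f=ptrans and g=mconj and h="\<lambda>x. x"])
  fix A :: "complex^'a^'a" and B :: "complex^'b^'b" assume "is_state A" "is_state B"
  then have "hermitian A" by (simp add: is_state_def psd_def)
  then show "ptrans (kron A B) = kron (mconj A) B" by (rule ptrans_kron)
qed (auto simp: ptrans_add ptrans_scaleR state_mconj assms)

lemma unitary_adj: "unitary U \<Longrightarrow> unitary (adj U)"
  by (simp add: unitary_def)

lemma kron_one: "kron (mat 1) (mat 1) = mat 1"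
  by (auto simp: kron_def mat_def vec_eq_iff prod_eq_iff)

lemma unitary_kron: "unitary U \<Longrightarrow> unitary V \<Longrightarrow> unitary (kron U V)"
  by (simp add: unitary_def adj_kron kron_mult kron_one)

lemma conj_kron: "kron U V ** kron A B ** adj (kron U V) = kron (U ** A ** adj U) (V ** B ** adj V)"
  by (simp add: adj_kron kron_mult)

lemma sep_conj: fixes U :: "complex^'a::finite^'a" and V :: "complex^'b::finite^'b"
  assumes "unitary U" "unitary V" "separable \<sigma>"
  shows "separable (kron U V ** \<sigma> ** adj (kron U V))"
proof (rule sep_map[where f="\<lambda>X. kron U V ** X ** adj (kron U V)" and g="\<lambda>A. U ** A ** adj U" and h="\<lambda>B. V ** B ** adj V"])
  fix r X
  show "kron U V ** (r *\<^sub>R X) ** adj (kron U V) = r *\<^sub>R (kron U V ** X ** adj (kron U V))"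
    by (simp only: matrix_scalar_ac scalar_matrix_assoc)
next
  fix X Y
  show "kron U V ** (X + Y) ** adj (kron U V) = kron U V ** X ** adj (kron U V) + kron U V ** Y ** adj (kron U V)"
    by (simp only: matrix_add_ldistrib matrix_add_rdistrib')
next
  fix A B
  show "kron U V ** kron A B ** adj (kron U V) = kron (U ** A ** adj U) (V ** B ** adj V)"
    by (rule conj_kron)
next
  fix A :: "complex^'a^'a" assume "is_state A" then show "is_state (U ** A ** adj U)"
    using assms(1) state_conj by blast
next
  fix A :: "complex^'b^'b" assume "is_state A" then show "is_state (V ** A ** adj V)"
    using assms(2) state_conj by blast
qed (rule assms(3))

lemma conj_back: assumes "unitary K" shows "adj K ** (K ** X ** adj K) ** K = X"
proof -
  have "adj K ** (K ** X ** adj K) ** K = (adj K ** K) ** X ** (adj K ** K)"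
    by (simp add: matrix_mul_assoc)
  then show ?thesis using assms by (simp add: unitary_def)
qed

lemma trace_conj_unitary: assumes "unitary K" shows "trace (K ** X ** adj K) = trace X"
proof -
  have "trace (K ** X ** adj K) = trace (adj K ** (K ** X))" by (rule trace_mul_sym)
  also have "\<dots> = trace ((adj K ** K) ** X)" by (simp add: matrix_mul_assoc)
  finally show ?thesis using assms by (simp add: unitary_def)
qed

lemma trace_conj_move: "trace (K ** W ** adj K ** T) = trace (W ** (adj K ** T ** K))"
proof -
  have "trace (K ** W ** adj K ** T) = trace (K ** (W ** adj K ** T))" by (simp add: matrix_mul_assoc)
  also have "\<dots> = trace ((W ** adj K ** T) ** K)" by (rule trace_mul_sym)
  finally show ?thesis by (simp add: matrix_mul_assoc)
qed

lemma ent_mconj: "entangled \<rho> \<Longrightarrow> entangled (mconj \<rho>)"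
  unfolding entangled_def by (metis mconj_mconj sep_mconj state_mconj)

lemma tr_mconj: "Re (trace (mconj W ** mconj \<sigma>)) = Re (trace (W ** \<sigma>))"
  by (simp add: mconj_mult[symmetric] trace_mconj)

lemma herm_mconj: "hermitian W \<Longrightarrow> hermitian (mconj W)"
  by (simp add: hermitian_def adj_mconj)

lemma mem_mconj: assumes "entangled \<rho>" "W \<in> EWset \<rho>" shows "mconj W \<in> EWset (mconj \<rho>)"
proof -
  have "0 \<le> Re (trace (mconj W ** \<sigma>))" if "separable \<sigma>" for \<sigma>
  proof -
    have "Re (trace (mconj W ** \<sigma>)) = Re (trace (W ** mconj \<sigma>))"
      by (metis tr_mconj mconj_mconj)
    then show ?thesis using that sep_mconj assms by (auto simp: EWset_iff)
  qed
  then show ?thesis using assms ent_mconj[OF assms(1)]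
    by (auto simp: EWset_iff herm_mconj tr_mconj)
qed

lemma mem_mconj_iff: "entangled \<rho> \<Longrightarrow> W \<in> EWset \<rho> \<longleftrightarrow> mconj W \<in> EWset (mconj \<rho>)"
  by (metis mem_mconj ent_mconj mconj_mconj)

lemma convex_EWset: assumes "entangled \<rho>" shows "convex (EWset \<rho>)"
  unfolding convex_def
proof (intro ballI allI impI)
  fix x y u v assume xy: "x \<in> EWset \<rho>" "y \<in> EWset \<rho>" and uv: "0 \<le> (u::real)" "0 \<le> v" "u + v = 1"
  have tr: "Re (trace ((u *\<^sub>R x + v *\<^sub>R y) ** T)) = u * Re (trace (x ** T)) + v * Re (trace (y ** T))" for T
    by (simp add: matrix_add_rdistrib' scalar_matrix_assoc[symmetric] trace_add trace_scaleR)
  have h: "hermitian (u *\<^sub>R x + v *\<^sub>R y)"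
    using xy assms by (simp add: EWset_iff hermitian_def adj_add adj_scaleR)
  have s: "0 \<le> Re (trace ((u *\<^sub>R x + v *\<^sub>R y) ** \<sigma>))" if "separable \<sigma>" for \<sigma>
    using xy assms that uv by (simp add: EWset_iff tr)
  have a: "Re (trace (x ** \<rho>)) < 0" "Re (trace (y ** \<rho>)) < 0" using xy assms by (auto simp: EWset_iff)
  have "u * Re (trace (x ** \<rho>)) + v * Re (trace (y ** \<rho>)) < 0"
  proof (cases "u = 0")
    case True then show ?thesis using uv a by simp
  next
    case False then have "u > 0" using uv by simp
    then have "u * Re (trace (x ** \<rho>)) < 0" using a by (simp add: mult_pos_neg)
    moreover have "v * Re (trace (y ** \<rho>)) \<le> 0" using a uv by (simp add: mult_nonneg_nonpos)
    ultimately show ?thesis by simp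
  qed
  then show "u *\<^sub>R x + v *\<^sub>R y \<in> EWset \<rho>" using assms h s by (simp add: EWset_iff tr)
qed

lemma real_mconj: "real_matrix W \<Longrightarrow> mconj W = W"
  by (simp add: real_matrix_def mconj_def vec_eq_iff complex_eq_iff)

lemma real_part: assumes "entangled \<rho>"
  shows "(\<exists>W\<in>EWset \<rho>. real_matrix W) \<longleftrightarrow> EWset \<rho> \<inter> EWset (mconj \<rho>) \<noteq> {}"
proof
  assume "\<exists>W\<in>EWset \<rho>. real_matrix W"
  then obtain W where "W \<in> EWset \<rho>" "real_matrix W" by blast
  then show "EWset \<rho> \<inter> EWset (mconj \<rho>) \<noteq> {}"
    using mem_mconj[OF assms] real_mconj by fastforce
next
  assume "EWset \<rho> \<inter> EWset (mconj \<rho>) \<noteq> {}"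
  then obtain W where W: "W \<in> EWset \<rho>" "W \<in> EWset (mconj \<rho>)" by blast
  have "mconj W \<in> EWset \<rho>" using W(2) mem_mconj_iff[OF assms, of "mconj W"] by simp
  then have "(1/2::real) *\<^sub>R W + (1/2::real) *\<^sub>R mconj W \<in> EWset \<rho>"
  proof -
    have c: "convex (EWset \<rho>)" by (rule convex_EWset[OF assms])
    have "(1/2::real) + 1/2 = 1" "(0::real) \<le> 1/2" by simp_all
    then show ?thesis using c W(1) \<open>mconj W \<in> EWset \<rho>\<close> unfolding convex_def by blast
  qed
  moreover have "real_matrix ((1/2::real) *\<^sub>R W + (1/2::real) *\<^sub>R mconj W)"
    by (simp add: real_matrix_def mconj_def)
  ultimately show "\<exists>W\<in>EWset \<rho>. real_matrix W" by blast
qed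

lemma herm_ptrans: "hermitian W \<Longrightarrow> hermitian (ptrans W)"
  by (simp add: hermitian_def adj_ptrans)

lemma tr_ptrans2: "trace (W ** ptrans \<sigma>) = trace (ptrans W ** \<sigma>)"
  by (metis trace_ptrans_mult ptrans_ptrans)

lemma ent_ptrans: "PPT \<rho> \<Longrightarrow> entangled \<rho> \<Longrightarrow> entangled (ptrans \<rho>)"
  unfolding entangled_def PPT_def is_state_def
  by (metis ptrans_ptrans sep_ptrans trace_ptrans)

lemma ptrans_part: assumes "entangled \<rho>" "PPT \<rho>"
  shows "W \<in> EWset \<rho> \<longleftrightarrow> ptrans W \<in> EWset (ptrans \<rho>)"
proof
  assume W: "W \<in> EWset \<rho>"
  have "0 \<le> Re (trace (ptrans W ** \<sigma>))" if "separable \<sigma>" for \<sigma>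
    using W assms(1) sep_ptrans[OF that] by (simp add: EWset_iff tr_ptrans2[symmetric])
  then show "ptrans W \<in> EWset (ptrans \<rho>)"
    using W assms ent_ptrans[OF assms(2,1)] by (simp add: EWset_iff herm_ptrans trace_ptrans_mult)
next
  assume W: "ptrans W \<in> EWset (ptrans \<rho>)"
  have e: "entangled (ptrans \<rho>)" using ent_ptrans[OF assms(2,1)] .
  have "0 \<le> Re (trace (W ** \<sigma>))" if "separable \<sigma>" for \<sigma>
  proof -
    have "0 \<le> Re (trace (ptrans W ** ptrans \<sigma>))"
      using W e sep_ptrans[OF that] by (simp add: EWset_iff)
    then show ?thesis by (simp add: trace_ptrans_mult)
  qed
  then show "W \<in> EWset \<rho>"
    using W assms e herm_ptrans[of "ptrans W"] trace_ptrans_mult[of W \<rho>] by (simp add: EWset_iff)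
qed

lemma matrix_scalar_right: "(A::complex^'n^'m) ** (k *\<^sub>R B) = k *\<^sub>R (A ** B)"
  by (simp only: matrix_scalar_ac scalar_matrix_assoc)

lemma tr_plus: "Re (trace (W ** rho_plus \<rho>)) = (Re (trace (W ** \<rho>)) + Re (trace (W ** mconj \<rho>))) / 2"
  by (simp add: rho_plus_def matrix_scalar_right matrix_add_ldistrib trace_scaleR trace_add)

lemma plus_part: assumes "entangled \<rho>" "separable (rho_plus \<rho>)"
  shows "(\<forall>W\<in>EWset \<rho>. Re (trace (W ** mconj \<rho>)) \<ge> - Re (trace (W ** \<rho>))
                          \<and> - Re (trace (W ** \<rho>)) > 0)
        \<and> (\<forall>W\<in>EWset (mconj \<rho>). Re (trace (W ** \<rho>)) \<ge> - Re (trace (W ** mconj \<rho>))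
                          \<and> - Re (trace (W ** mconj \<rho>)) > 0)"
proof -
  have em: "entangled (mconj \<rho>)" using ent_mconj[OF assms(1)] .
  have key: "0 \<le> Re (trace (W ** \<rho>)) + Re (trace (W ** mconj \<rho>))"
    if "W \<in> EWset \<rho> \<or> W \<in> EWset (mconj \<rho>)" for W
  proof -
    have "0 \<le> Re (trace (W ** rho_plus \<rho>))"
      using that assms em by (auto simp: EWset_iff)
    then show ?thesis by (simp add: tr_plus)
  qed
  show ?thesis
  proof (intro conjI ballI)
    fix W assume W: "W \<in> EWset \<rho>"
    have "Re (trace (W ** \<rho>)) < 0" using W assms(1) by (simp add: EWset_iff)
    then show "Re (trace (W ** mconj \<rho>)) \<ge> - Re (trace (W ** \<rho>))" "- Re (trace (W ** \<rho>)) > 0"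
      using key[of W] W by auto
  next
    fix W assume W: "W \<in> EWset (mconj \<rho>)"
    have "Re (trace (W ** mconj \<rho>)) < 0" using W em by (simp add: EWset_iff)
    then show "Re (trace (W ** \<rho>)) \<ge> - Re (trace (W ** mconj \<rho>))" "- Re (trace (W ** mconj \<rho>)) > 0"
      using key[of W] W by auto
  qed
qed

lemma ent_conj: assumes "unitary U" "unitary V" "entangled \<rho>"
  shows "entangled (kron U V ** \<rho> ** adj (kron U V))"
proof -
  let ?K = "kron U V"
  have "\<not> separable (?K ** \<rho> ** adj ?K)"
  proof
    assume "separable (?K ** \<rho> ** adj ?K)"
    from sep_conj[OF unitary_adj[OF assms(1)] unitary_adj[OF assms(2)] this]
    have "separable (adj ?K ** (?K ** \<rho> ** adj ?K) ** ?K)" by (simp add: adj_kron[symmetric])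
    then show False using assms conj_back[OF unitary_kron[OF assms(1,2)]] by (simp add: entangled_def)
  qed
  then show ?thesis using assms state_conj unitary_kron by (auto simp: entangled_def)
qed

lemma conj_mem: assumes "unitary U" "unitary V" "entangled \<rho>" "W \<in> EWset \<rho>"
  shows "kron U V ** W ** adj (kron U V) \<in> EWset (kron U V ** \<rho> ** adj (kron U V))"
proof -
  let ?K = "kron U V"
  have uK: "unitary ?K" using assms unitary_kron by blast
  have h: "hermitian (?K ** W ** adj ?K)"
    using assms by (simp add: EWset_iff hermitian_def adj_mult matrix_mul_assoc)
  have s: "0 \<le> Re (trace (?K ** W ** adj ?K ** \<sigma>))" if "separable \<sigma>" for \<sigma>
  proof -
    have "separable (adj ?K ** \<sigma> ** ?K)"
      using sep_conj[OF unitary_adj[OF assms(1)] unitary_adj[OF assms(2)] that]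
      by (simp add: adj_kron[symmetric])
    then show ?thesis using assms by (simp add: trace_conj_move EWset_iff)
  qed
  have "?K ** W ** adj ?K ** (?K ** \<rho> ** adj ?K) = ?K ** W ** (adj ?K ** ?K) ** \<rho> ** adj ?K"
    by (simp add: matrix_mul_assoc)
  also have "\<dots> = ?K ** (W ** \<rho>) ** adj ?K"
    using uK by (simp add: unitary_def matrix_mul_assoc)
  finally have "trace (?K ** W ** adj ?K ** (?K ** \<rho> ** adj ?K)) = trace (?K ** (W ** \<rho>) ** adj ?K)"
    by simp
  also have "\<dots> = trace (W ** \<rho>)" using uK by (rule trace_conj_unitary)
  finally show ?thesis using assms h s ent_conj[OF assms(1-3)] by (simp add: EWset_iff)
qed

lemma unit_part: assumes "entangled \<rho>" "unitary U" "unitary V" "\<sigma> = kron U V ** \<rho> ** adj (kron U V)"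
  shows "(\<forall>W\<in>EWset \<rho>. kron U V ** W ** adj (kron U V) \<in> EWset \<sigma>)
          \<and> EWset \<sigma> = (\<lambda>W. kron U V ** W ** adj (kron U V)) ` EWset \<rho>"
proof -
  let ?K = "kron U V"
  have uK: "unitary ?K" using assms unitary_kron by blast
  have 1: "\<forall>W\<in>EWset \<rho>. ?K ** W ** adj ?K \<in> EWset \<sigma>" using assms conj_mem by blast
  have "W' \<in> (\<lambda>W. ?K ** W ** adj ?K) ` EWset \<rho>" if W': "W' \<in> EWset \<sigma>" for W'
  proof -
    have e: "entangled \<sigma>" using ent_conj assms by blast
    have "kron (adj U) (adj V) ** W' ** adj (kron (adj U) (adj V))
        \<in> EWset (kron (adj U) (adj V) ** \<sigma> ** adj (kron (adj U) (adj V)))"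
      using conj_mem[OF unitary_adj[OF assms(2)] unitary_adj[OF assms(3)] e W'] .
    then have "adj ?K ** W' ** ?K \<in> EWset \<rho>"
      using conj_back[OF uK, of \<rho>] assms(4) by (simp add: adj_kron[symmetric])
    moreover have "W' = ?K ** (adj ?K ** W' ** ?K) ** adj ?K"
      using conj_back[OF unitary_adj[OF uK], of W'] by simp
    ultimately show ?thesis by blast
  qed
  then show ?thesis using 1 by blast
qed


theorem lemma3:
  fixes \<rho> :: "complex^('a::finite \<times> 'b::finite)^('a \<times> 'b)"
  assumes "entangled \<rho>"
  shows
    "convex (EWset \<rho>)
     \<and> (entangled (mconj \<rho>)
        \<and> (\<forall>W. W \<in> EWset \<rho> \<longleftrightarrow> mconj W \<in> EWset (mconj \<rho>))
        \<and> ((\<exists>W\<in>EWset \<rho>. real_matrix W) \<longleftrightarrow> EWset \<rho> \<inter> EWset (mconj \<rho>) \<noteq> {}))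
     \<and> (PPT \<rho> \<longrightarrow> (\<forall>W. W \<in> EWset \<rho> \<longleftrightarrow> ptrans W \<in> EWset (ptrans \<rho>)))
     \<and> (PPT \<rho> \<and> separable (rho_plus \<rho>) \<longrightarrow>
          (\<forall>W\<in>EWset \<rho>. Re (trace (W ** mconj \<rho>)) \<ge> - Re (trace (W ** \<rho>))
                          \<and> - Re (trace (W ** \<rho>)) > 0)
        \<and> (\<forall>W\<in>EWset (mconj \<rho>). Re (trace (W ** \<rho>)) \<ge> - Re (trace (W ** mconj \<rho>))
                          \<and> - Re (trace (W ** mconj \<rho>)) > 0))
     \<and> (\<forall>(U::complex^'a^'a) (V::complex^'b^'b) \<sigma>.
          unitary U \<and> unitary V \<and> \<sigma> = kron U V ** \<rho> ** adj (kron U V) \<longrightarrow>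
            (\<forall>W\<in>EWset \<rho>. kron U V ** W ** adj (kron U V) \<in> EWset \<sigma>)
          \<and> EWset \<sigma> = (\<lambda>W. kron U V ** W ** adj (kron U V)) ` EWset \<rho>)"
  proof -
  have p3: "PPT \<rho> \<longrightarrow> (\<forall>W. W \<in> EWset \<rho> \<longleftrightarrow> ptrans W \<in> EWset (ptrans \<rho>))"
    using ptrans_part[OF assms] by blast
  have p4: "PPT \<rho> \<and> separable (rho_plus \<rho>) \<longrightarrow>
          (\<forall>W\<in>EWset \<rho>. Re (trace (W ** mconj \<rho>)) \<ge> - Re (trace (W ** \<rho>))
                          \<and> - Re (trace (W ** \<rho>)) > 0)
        \<and> (\<forall>W\<in>EWset (mconj \<rho>). Re (trace (W ** \<rho>)) \<ge> - Re (trace (W ** mconj \<rho>))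
                          \<and> - Re (trace (W ** mconj \<rho>)) > 0)"
    using plus_part[OF assms] by blast
  have p5: "\<forall>(U::complex^'a^'a) (V::complex^'b^'b) \<sigma>.
          unitary U \<and> unitary V \<and> \<sigma> = kron U V ** \<rho> ** adj (kron U V) \<longrightarrow>
            (\<forall>W\<in>EWset \<rho>. kron U V ** W ** adj (kron U V) \<in> EWset \<sigma>)
          \<and> EWset \<sigma> = (\<lambda>W. kron U V ** W ** adj (kron U V)) ` EWset \<rho>"
    using unit_part[OF assms] by blast
  have p2: "\<forall>W. W \<in> EWset \<rho> \<longleftrightarrow> mconj W \<in> EWset (mconj \<rho>)"
    using mem_mconj_iff[OF assms] by blast
  show ?thesis
    using convex_EWset[OF assms] ent_mconj[OF assms] p2 real_part[OF assms] p3 p4 p5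
    by (intro conjI) blast+
qed

end
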